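(* Let $M$ be a matroid on a finite set $E$ with $r(M)>0$. Then $|F(M)|=r(M)$ if and only if $M$ is a unique expansion matroid.
   Context: For a matroid $M=(E,\mathcal{I})$: $\mathcal{B}(M)$ is its family of bases, $r(M)$ the common cardinality of bases, and $r(X)$ the rank of $X\subseteq E$. For $r(M)>0$: $s(M)=\{A\in\mathcal{I}(M): |A|=r(M)-1\}$; $K_M(X)=\{a\in E: r(X\cup\{a\})=r(X)+1\}$ for $X\subseteq E$; $F(M)=\{K_M(X): X\in s(M)\}$ (a set of sets, so $|F(M)|$ counts distinct sets). $M$ is a unique expansion matroid if for every $B\in\mathcal{B}(M)$ and every $A\in s(M)$, whenever $e_1,e_2\in B$ satisfy $A\cup\{e_1\}\in\mathcal{B}(M)$ and $A\cup\{e_2\}\in\mathcal{B}(M)$, then $e_1=e_2$. *)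

theory Defs
  imports Main
begin

definition matroid :: "'a set \<Rightarrow> 'a set set \<Rightarrow> bool" where
  "matroid E \<I> \<longleftrightarrow> finite E \<and> \<I> \<subseteq> Pow E \<and> {} \<in> \<I>
     \<and> (\<forall>A B. B \<in> \<I> \<and> A \<subseteq> B \<longrightarrow> A \<in> \<I>)
     \<and> (\<forall>A B. A \<in> \<I> \<and> B \<in> \<I> \<and> card A < card B \<longrightarrow> (\<exists>x \<in> B - A. insert x A \<in> \<I>))"

definition bases :: "'a set \<Rightarrow> 'a set set \<Rightarrow> 'a set set" where
  "bases E \<I> = {B. B \<in> \<I> \<and> (\<forall>C \<in> \<I>. B \<subseteq> C \<longrightarrow> C = B)}"

definition rank_of :: "'a set \<Rightarrow> 'a set set \<Rightarrow> 'a set \<Rightarrow> nat" where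
  "rank_of E \<I> X = Max (card ` {A. A \<in> \<I> \<and> A \<subseteq> X})"

definition mrank :: "'a set \<Rightarrow> 'a set set \<Rightarrow> nat" where
  "mrank E \<I> = rank_of E \<I> E"

definition sM :: "'a set \<Rightarrow> 'a set set \<Rightarrow> 'a set set" where
  "sM E \<I> = {A. A \<in> \<I> \<and> card A = mrank E \<I> - 1}"

definition KM :: "'a set \<Rightarrow> 'a set set \<Rightarrow> 'a set \<Rightarrow> 'a set" where
  "KM E \<I> X = {a \<in> E. rank_of E \<I> (insert a X) = rank_of E \<I> X + 1}"

definition FM :: "'a set \<Rightarrow> 'a set set \<Rightarrow> 'a set set" where
  "FM E \<I> = KM E \<I> ` sM E \<I>"

definition unique_expansion :: "'a set \<Rightarrow> 'a set set \<Rightarrow> bool" where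
  "unique_expansion E \<I> \<longleftrightarrow>
     (\<forall>B \<in> bases E \<I>. \<forall>A \<in> sM E \<I>. \<forall>e1 \<in> B. \<forall>e2 \<in> B.
        insert e1 A \<in> bases E \<I> \<and> insert e2 A \<in> bases E \<I> \<longrightarrow> e1 = e2)"

end

theory Submission
  imports Defs
begin

locale mat =
  fixes E :: "'a set" and I :: "'a set set"
  assumes m: "matroid E I"
begin

lemma mm: "finite E \<and> I \<subseteq> Pow E \<and> {} \<in> I
     \<and> (\<forall>A B. B \<in> I \<and> A \<subseteq> B \<longrightarrow> A \<in> I)
     \<and> (\<forall>A B. A \<in> I \<and> B \<in> I \<and> card A < card B \<longrightarrow> (\<exists>x \<in> B - A. insert x A \<in> I))"
  using m unfolding matroid_def .
lemma finE: "finite E" using mm by (rule conjunct1)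
lemma IPow: "I \<subseteq> Pow E" using mm[THEN conjunct2] by (rule conjunct1)
lemma empI: "{} \<in> I" using mm[THEN conjunct2, THEN conjunct2] by (rule conjunct1)
lemma subI: "B \<in> I \<Longrightarrow> A \<subseteq> B \<Longrightarrow> A \<in> I"
  using mm[THEN conjunct2, THEN conjunct2, THEN conjunct2, THEN conjunct1] by blast
lemma aug: "A \<in> I \<Longrightarrow> B \<in> I \<Longrightarrow> card A < card B \<Longrightarrow> \<exists>x \<in> B - A. insert x A \<in> I"
  using mm[THEN conjunct2, THEN conjunct2, THEN conjunct2, THEN conjunct2] by blast
lemma indE: "A \<in> I \<Longrightarrow> A \<subseteq> E" using IPow by blast
lemma indfin: "A \<in> I \<Longrightarrow> finite A" by (rule finite_subset[OF indE finE])
lemma finI: "finite I" using IPow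
  by (rule finite_subset) (simp add: finE)

lemma rk_fin: "finite (card ` {A. A \<in> I \<and> A \<subseteq> X})"
  using finI by (simp add: finite_subset)

lemma rank_ge: "J \<in> I \<Longrightarrow> J \<subseteq> X \<Longrightarrow> card J \<le> rank_of E I X"
  unfolding rank_of_def using rk_fin by (intro Max_ge) auto

lemma rank_ex: "\<exists>J. J \<in> I \<and> J \<subseteq> X \<and> card J = rank_of E I X"
proof -
  have "({}::'a set) \<in> {A. A \<in> I \<and> A \<subseteq> X}" using empI by auto
  hence "card ({}::'a set) \<in> card ` {A. A \<in> I \<and> A \<subseteq> X}" by (rule imageI)
  hence "rank_of E I X \<in> card ` {A. A \<in> I \<and> A \<subseteq> X}"
    unfolding rank_of_def using rk_fin by (intro Max_in) auto
  thus ?thesis by auto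
qed

lemma rank_indep: "J \<in> I \<Longrightarrow> rank_of E I J = card J"
proof -
  assume J: "J \<in> I"
  obtain K where K: "K \<in> I" "K \<subseteq> J" "card K = rank_of E I J" using rank_ex by blast
  have "card K \<le> card J" using K indfin J card_mono by blast
  thus ?thesis using rank_ge[OF J subset_refl] K by auto
qed

lemma extend: "A \<in> I \<Longrightarrow> A \<subseteq> X \<Longrightarrow> \<exists>J. A \<subseteq> J \<and> J \<subseteq> X \<and> J \<in> I \<and> card J = rank_of E I X"
proof (induction "rank_of E I X - card A" arbitrary: A rule: less_induct)
  case less
  show ?case
  proof (cases "card A < rank_of E I X")
    case False
    have "card A \<le> rank_of E I X" using rank_ge[OF less.prems] .
    hence ca: "card A = rank_of E I X" using False by linarith
    show ?thesis
      apply (rule exI[of _ A])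
      using less.prems ca by simp
  next
    case True
    obtain K where K: "K \<in> I" "K \<subseteq> X" "card K = rank_of E I X" using rank_ex by blast
    obtain x where x: "x \<in> K - A" "insert x A \<in> I" using aug[OF less.prems(1) K(1)] True K by auto
    have fa: "finite A" using indfin less.prems by blast
    have c: "card (insert x A) = card A + 1" using x fa by auto
    have lt: "rank_of E I X - card (insert x A) < rank_of E I X - card A" using c True by auto
    have sx: "insert x A \<subseteq> X" using x K less.prems by auto
    have "\<exists>J. insert x A \<subseteq> J \<and> J \<subseteq> X \<and> J \<in> I \<and> card J = rank_of E I X"
      by (rule less.hyps[OF lt x(2) sx])
    thus ?thesis by blast
  qed
qed

abbreviation r where "r \<equiv> mrank E I"

lemma card_le_r: "J \<in> I \<Longrightarrow> card J \<le> r"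
  unfolding mrank_def using rank_ge indE by blast

lemma bases_iff: "B \<in> bases E I \<longleftrightarrow> B \<in> I \<and> card B = r"
proof
  assume B: "B \<in> bases E I"
  hence BI: "B \<in> I" and mx: "\<forall>C\<in>I. B \<subseteq> C \<longrightarrow> C = B" unfolding bases_def by auto
  obtain J where "B \<subseteq> J" "J \<subseteq> E" "J \<in> I" "card J = r"
    using extend[OF BI indE[OF BI]] unfolding mrank_def by blast
  thus "B \<in> I \<and> card B = r" using mx BI by auto
next
  assume B: "B \<in> I \<and> card B = r"
  have "\<forall>C\<in>I. B \<subseteq> C \<longrightarrow> C = B"
  proof (intro ballI impI)
    fix C assume C: "C \<in> I" "B \<subseteq> C"
    have "card C \<le> card B" using card_le_r[OF C(1)] B by auto
    thus "C = B" using card_seteq[OF indfin[OF C(1)] C(2)] by auto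
  qed
  thus "B \<in> bases E I" unfolding bases_def using B by auto
qed

lemma basis_ex: "\<exists>B. B \<in> bases E I"
proof -
  obtain J where "J \<in> I" "card J = rank_of E I E" using extend[OF empI, of E] by blast
  thus ?thesis using bases_iff unfolding mrank_def by blast
qed

lemma K_sM:
  assumes A: "A \<in> sM E I" and r0: "r > 0"
  shows "a \<in> KM E I A \<longleftrightarrow> insert a A \<in> bases E I"
proof -
  have AI: "A \<in> I" and cA: "card A = r - 1" using A unfolding sM_def by auto
  have fa: "finite A" using indfin AI by blast
  have rA: "rank_of E I A = card A" using rank_indep AI by blast
  show ?thesis
  proof
    assume "a \<in> KM E I A"
    hence aE: "a \<in> E" and rk: "rank_of E I (insert a A) = card A + 1" unfolding KM_def using rA by auto
    obtain J where J: "J \<in> I" "J \<subseteq> insert a A" "card J = card A + 1" using rank_ex rk by metis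
    have "card (insert a A) \<le> card A + 1" using fa by (simp add: card_insert_if)
    hence "J = insert a A" using J fa card_seteq[of "insert a A" J] by auto
    thus "insert a A \<in> bases E I" using J cA r0 bases_iff by auto
  next
    assume b: "insert a A \<in> bases E I"
    hence bI: "insert a A \<in> I" and cb: "card (insert a A) = r" using bases_iff by auto
    have "a \<notin> A" using cb cA r0 by (metis diff_less insert_absorb less_numeral_extra(1) nat_neq_iff)
    hence "card (insert a A) = card A + 1" using fa by auto
    moreover have "a \<in> E" using indE[OF bI] by auto
    ultimately show "a \<in> KM E I A" unfolding KM_def using rank_indep[OF bI] rA by auto
  qed
qed

lemma K_sub:
  assumes A: "A \<in> sM E I" and A': "A' \<in> sM E I" and r0: "r > 0"
    and ru: "rank_of E I (A \<union> A') = r - 1"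
  shows "KM E I A \<subseteq> KM E I A'"
proof
  fix x assume "x \<in> KM E I A"
  hence xb: "insert x A \<in> bases E I" using K_sM A r0 by blast
  have A'I: "A' \<in> I" and cA': "card A' = r - 1" using A' unfolding sM_def by auto
  define S where "S = insert x (A \<union> A')"
  have "card (insert x A) \<le> rank_of E I S" using xb bases_iff S_def by (intro rank_ge) auto
  hence rS: "r \<le> rank_of E I S" using xb bases_iff by auto
  obtain J where J: "A' \<subseteq> J" "J \<subseteq> S" "J \<in> I" "card J = rank_of E I S"
    using extend[OF A'I, of S] S_def by auto
  have cJ: "card J = r" using J rS card_le_r by (metis antisym)
  have fJ: "finite J" using J indfin by blast
  have xJ: "x \<in> J"
  proof (rule ccontr)
    assume "x \<notin> J"
    hence "J \<subseteq> A \<union> A'" using J S_def by auto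
    hence "card J \<le> r - 1" using rank_ge[OF J(3), of "A \<union> A'"] ru by simp
    thus False using cJ r0 by auto
  qed
  have xA': "x \<notin> A'"
  proof
    assume "x \<in> A'"
    hence "J \<subseteq> A \<union> A'" using J S_def by auto
    hence "card J \<le> r - 1" using rank_ge[OF J(3), of "A \<union> A'"] ru by simp
    thus False using cJ r0 by auto
  qed
  have "card (insert x A') = r" using xA' cA' r0 indfin[OF A'I] by auto
  hence "insert x A' = J" using J xJ fJ cJ card_subset_eq by (metis insert_subset)
  hence "insert x A' \<in> bases E I" using J cJ bases_iff by auto
  thus "x \<in> KM E I A'" using K_sM A' r0 by blast
qed

lemma K_eq:
  assumes A: "A \<in> sM E I" and A': "A' \<in> sM E I" and r0: "r > 0"
    and ru: "rank_of E I (A \<union> A') = r - 1"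
  shows "KM E I A = KM E I A'"
  using K_sub[OF A A' r0 ru] K_sub[OF A' A r0] ru by (simp add: Un_commute)

lemma closure:
  assumes AI: "A \<in> I" and Y: "\<forall>e\<in>Y. rank_of E I (insert e A) = card A"
  shows "rank_of E I (A \<union> Y) = card A"
proof -
  obtain J where J: "A \<subseteq> J" "J \<subseteq> A \<union> Y" "J \<in> I" "card J = rank_of E I (A \<union> Y)"
    using extend[OF AI, of "A \<union> Y"] by auto
  have fJ: "finite J" using J indfin by blast
  have "card A \<le> card J" using J fJ card_mono by blast
  moreover have "\<not> card A < card J"
  proof
    assume lt: "card A < card J"
    have "\<not> J \<subseteq> A" using card_mono[OF indfin[OF AI]] lt by (meson not_le)
    then obtain e where e: "e \<in> J" "e \<notin> A" by blast
    hence eY: "e \<in> Y" using J by auto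
    have "insert e A \<in> I" using subI[OF J(3)] e J by auto
    hence "card (insert e A) \<le> rank_of E I (insert e A)" by (intro rank_ge) auto
    thus False using Y eY e indfin[OF AI] by auto
  qed
  ultimately show ?thesis using J by auto
qed

lemma fund:
  assumes B: "B \<in> bases E I" and b: "b \<in> B" and r0: "r > 0"
  shows "B - {b} \<in> sM E I" "KM E I (B - {b}) \<inter> B = {b}"
proof -
  have BI: "B \<in> I" and cB: "card B = r" using B bases_iff by auto
  show s: "B - {b} \<in> sM E I" unfolding sM_def using subI[OF BI] cB b by auto
  show "KM E I (B - {b}) \<inter> B = {b}"
  proof (intro equalityI subsetI)
    fix x assume x: "x \<in> KM E I (B - {b}) \<inter> B"
    hence "insert x (B - {b}) \<in> bases E I" using K_sM[OF s r0] by auto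
    hence "card (insert x (B - {b})) = r" using bases_iff by auto
    thus "x \<in> {b}" using x cB r0 b indfin[OF BI]
      by (cases "x = b") (auto simp: insert_absorb)
  next
    fix x assume "x \<in> {b}"
    thus "x \<in> KM E I (B - {b}) \<inter> B" using K_sM[OF s r0] b B by (auto simp: insert_absorb)
  qed
qed

lemma FM_fin: "finite (FM E I)"
  unfolding FM_def sM_def using finI by (auto intro: finite_subset)

lemma fund_inj:
  assumes B: "B \<in> bases E I" and r0: "r > 0"
  shows "inj_on (\<lambda>b. KM E I (B - {b})) B" "(\<lambda>b. KM E I (B - {b})) ` B \<subseteq> FM E I"
    "card ((\<lambda>b. KM E I (B - {b})) ` B) = r"
proof -
  show i: "inj_on (\<lambda>b. KM E I (B - {b})) B"
    by (rule inj_onI) (metis fund(2)[OF B _ r0] singleton_inject)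
  show "(\<lambda>b. KM E I (B - {b})) ` B \<subseteq> FM E I" unfolding FM_def using fund(1)[OF B _ r0] by auto
  show "card ((\<lambda>b. KM E I (B - {b})) ` B) = r" using card_image[OF i] B bases_iff by auto
qed

end

theorem theorem5:
  fixes E :: "'a set" and \<I> :: "'a set set"
  assumes "matroid E \<I>" and "mrank E \<I> > 0"
  shows "card (FM E \<I>) = mrank E \<I> \<longleftrightarrow> unique_expansion E \<I>"
proof -
  interpret mat E \<I> using assms(1) by unfold_locales
  note r0 = assms(2)
  obtain B0 where B0: "B0 \<in> bases E \<I>" using basis_ex by blast
  show ?thesis
  proof
    assume cF: "card (FM E \<I>) = mrank E \<I>"
    show "unique_expansion E \<I>" unfolding unique_expansion_def
    proof (intro ballI impI)
      fix B A e1 e2 assume B: "B \<in> bases E \<I>" and A: "A \<in> sM E \<I>" and e: "e1 \<in> B" "e2 \<in> B"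
        and ins: "insert e1 A \<in> bases E \<I> \<and> insert e2 A \<in> bases E \<I>"
      have "(\<lambda>b. KM E \<I> (B - {b})) ` B = FM E \<I>"
        using fund_inj[OF B r0] cF FM_fin by (metis card_subset_eq)
      moreover have "KM E \<I> A \<in> FM E \<I>" unfolding FM_def using A by auto
      ultimately obtain b where b: "b \<in> B" "KM E \<I> A = KM E \<I> (B - {b})" by auto
      have "e1 \<in> KM E \<I> A" "e2 \<in> KM E \<I> A" using K_sM[OF A r0] ins by auto
      hence "e1 \<in> KM E \<I> (B - {b}) \<inter> B" "e2 \<in> KM E \<I> (B - {b}) \<inter> B" using b e by auto
      thus "e1 = e2" using fund(2)[OF B b(1) r0] by (metis singletonD)
    qed
  next
    assume ue: "unique_expansion E \<I>"
    have "FM E \<I> \<subseteq> (\<lambda>b. KM E \<I> (B0 - {b})) ` B0"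
    proof
      fix K assume "K \<in> FM E \<I>"
      then obtain A where A: "A \<in> sM E \<I>" and K: "K = KM E \<I> A" unfolding FM_def by auto
      have AI: "A \<in> \<I>" and cA: "card A = mrank E \<I> - 1" using A unfolding sM_def by auto
      have B0I: "B0 \<in> \<I>" and cB: "card B0 = mrank E \<I>" using B0 bases_iff by auto
      obtain b where b: "b \<in> B0 - A" "insert b A \<in> \<I>" using aug[OF AI B0I] cA cB r0 by auto
      have fa: "finite A" using indfin AI by blast
      have bb: "insert b A \<in> bases E \<I>" using b fa cA r0 bases_iff by auto
      have cl: "\<forall>e\<in>B0 - {b}. rank_of E \<I> (insert e A) = card A"
      proof
        fix e assume e: "e \<in> B0 - {b}"
        show "rank_of E \<I> (insert e A) = card A"
        proof (cases "e \<in> A")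
          case True thus ?thesis using rank_indep AI by (simp add: insert_absorb)
        next
          case False
          have ge: "card A \<le> rank_of E \<I> (insert e A)" using rank_ge[OF AI, of "insert e A"] by blast
          obtain J where J: "J \<in> \<I>" "J \<subseteq> insert e A" "card J = rank_of E \<I> (insert e A)"
            using rank_ex by blast
          have le: "rank_of E \<I> (insert e A) \<le> card A + 1"
            using J card_mono[OF _ J(2)] fa False by auto
          have "insert e A \<notin> bases E \<I>" using ue B0 A b bb e unfolding unique_expansion_def by blast
          hence "e \<notin> KM E \<I> A" using K_sM[OF A r0] by auto
          hence "rank_of E \<I> (insert e A) \<noteq> card A + 1"
            using e B0 indE B0I rank_indep AI unfolding KM_def by auto
          thus ?thesis using ge le by auto
        qed
      qed
      have "rank_of E \<I> (A \<union> (B0 - {b})) = mrank E \<I> - 1" using closure[OF AI cl] cA by auto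
      hence "KM E \<I> A = KM E \<I> (B0 - {b})" using K_eq[OF A fund(1)[OF B0 _ r0]] b r0 by auto
      thus "K \<in> (\<lambda>b. KM E \<I> (B0 - {b})) ` B0" using K b by auto
    qed
    hence "card (FM E \<I>) \<le> mrank E \<I>" using fund_inj[OF B0 r0] card_mono by (metis finite_imageI indfin B0 bases_iff)
    moreover have "mrank E \<I> \<le> card (FM E \<I>)" using fund_inj[OF B0 r0] FM_fin card_mono by metis
    ultimately show "card (FM E \<I>) = mrank E \<I>" by auto
  qed
qed

end
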